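(* Let $J$ be a bounded open interval with $a>0$ on $J$, and let $x_0\in\partial J$ with $a(x_0)=0$. Let $\lambda\in\mathbb R$ and let $f\in C^1(J)$ be a bounded solution of $a(x)f'+H(x,f)=\lambda$ in $J$. Then $\lambda\ge\hat\lambda(x_0)$, and the limit $\lim_{x\to x_0,\,x\in J}f(x)$ exists and belongs to $\{p^-_\lambda(x_0),p^+_\lambda(x_0)\}$.
   Context: Deterministic setting: $a:\mathbb R\to[0,1]$ with $\sqrt a$ $\kappa$-Lipschitz. $H:\mathbb R\times\mathbb R\to\mathbb R$ belongs to $\mathscr H_{sqc}(\alpha_0,\alpha_1,\gamma,\eta)$ ($\gamma>2,\eta>0$): (H1) $\alpha_0|p|^\gamma-1/\alpha_0\le H(x,p)\le\alpha_1(|p|^\gamma+1)$, (H2) $|H(x,p)-H(x,q)|\le\alpha_1(|p|+|q|+1)^{\gamma-1}|p-q|$, (H3) $|H(x,p)-H(y,p)|\le\alpha_1(|p|^\gamma+1)|x-y|$, $H(x,\cdot)$ strictly quasiconvex with unique minimizer $\hat p(x)$, and $H(x,p_1)-H(x,p_2)\ge\eta|p_1-p_2|$ for $p_1<p_2\le\hat p(x)$, $H(x,p_2)-H(x,p_1)\ge\eta|p_1-p_2|$ for $p_2>p_1\ge\hat p(x)$. Notation: $\hat\lambda(x):=\min_pH(x,p)=H(x,\hat p(x))$; for $\lambda\ge\hat\lambda(x)$, $p^-_\lambda(x)\le p^+_\lambda(x)$ are defined by $\{p:H(x,p)\le\lambda\}=[p^-_\lambda(x),p^+_\lambda(x)]$.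 *)

theory Defs
  imports "HOL-Analysis.Analysis"
begin

definition strictly_quasiconvex :: "(real \<Rightarrow> real) \<Rightarrow> bool" where
  "strictly_quasiconvex g \<longleftrightarrow>
     (\<forall>p q t. p \<noteq> q \<and> 0 < t \<and> t < 1 \<longrightarrow> g (t * p + (1 - t) * q) < max (g p) (g q))"

definition hat_p :: "(real \<Rightarrow> real \<Rightarrow> real) \<Rightarrow> real \<Rightarrow> real" where
  "hat_p H x = (THE p. \<forall>q. H x p \<le> H x q)"

definition hat_lambda :: "(real \<Rightarrow> real \<Rightarrow> real) \<Rightarrow> real \<Rightarrow> real" where
  "hat_lambda H x = H x (hat_p H x)"

definition p_minus :: "(real \<Rightarrow> real \<Rightarrow> real) \<Rightarrow> real \<Rightarrow> real \<Rightarrow> real" where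
  "p_minus H lam x = Inf {p. H x p \<le> lam}"

definition p_plus :: "(real \<Rightarrow> real \<Rightarrow> real) \<Rightarrow> real \<Rightarrow> real \<Rightarrow> real" where
  "p_plus H lam x = Sup {p. H x p \<le> lam}"

definition H_sqc :: "real \<Rightarrow> real \<Rightarrow> real \<Rightarrow> real \<Rightarrow> (real \<Rightarrow> real \<Rightarrow> real) \<Rightarrow> bool" where
  "H_sqc \<alpha>0 \<alpha>1 \<gamma> \<eta> H \<longleftrightarrow>
     (\<forall>x p. \<alpha>0 * \<bar>p\<bar> powr \<gamma> - 1 / \<alpha>0 \<le> H x p \<and> H x p \<le> \<alpha>1 * (\<bar>p\<bar> powr \<gamma> + 1)) \<and>
     (\<forall>x p q. \<bar>H x p - H x q\<bar> \<le> \<alpha>1 * (\<bar>p\<bar> + \<bar>q\<bar> + 1) powr (\<gamma> - 1) * \<bar>p - q\<bar>) \<and>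
     (\<forall>x y p. \<bar>H x p - H y p\<bar> \<le> \<alpha>1 * (\<bar>p\<bar> powr \<gamma> + 1) * \<bar>x - y\<bar>) \<and>
     (\<forall>x. strictly_quasiconvex (H x) \<and> (\<exists>!p. \<forall>q. H x p \<le> H x q)) \<and>
     (\<forall>x p1 p2. p1 < p2 \<and> p2 \<le> hat_p H x \<longrightarrow> H x p1 - H x p2 \<ge> \<eta> * \<bar>p1 - p2\<bar>) \<and>
     (\<forall>x p1 p2. p2 > p1 \<and> p1 \<ge> hat_p H x \<longrightarrow> H x p2 - H x p1 \<ge> \<eta> * \<bar>p1 - p2\<bar>)"

end

theory Submission
  imports Defs
begin


lemma frontier_ioo: "x0 \<in> frontier {l<..<r::real} \<Longrightarrow> l < r \<Longrightarrow> x0 = l \<or> x0 = r"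
  by (auto simp add: frontier_def closure_greaterThanLessThan interior_open)

lemma barrier_ge:
  fixes f f' :: "real \<Rightarrow> real"
  assumes ly: "l < y"
    and der: "\<forall>t\<in>{l<..y}. (f has_real_derivative f' t) (at t)"
    and lev: "\<forall>t\<in>{l<..y}. f t = c \<longrightarrow> f' t < 0"
    and fy: "f y \<ge> c"
  shows "\<forall>t\<in>{l<..y}. f t \<ge> c"
proof (rule ccontr)
  assume "\<not> ?thesis"
  then obtain t where t: "t \<in> {l<..y}" "f t < c" by force
  have ty: "t < y" using t fy by (cases "t = y") auto
  have cont: "continuous_on {t..y} f"
    using der t by (intro continuous_at_imp_continuous_on) (auto intro: DERIV_isCont)
  define S where "S = {s \<in> {t..y}. f s \<ge> c}"
  have Sne: "S \<noteq> {}" using fy ty unfolding S_def by auto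
  have Sbdd: "bdd_below S" unfolding S_def by (auto intro: bdd_belowI[of _ t])
  have Scl: "closed S"
  proof -
    have "S = {t..y} \<inter> f -` {c..}" unfolding S_def by auto
    moreover have "closed ({t..y} \<inter> f -` {c..})"
      using continuous_closed_preimage[OF cont closed_atLeastAtMost, of "{c..}"] 
      by (metis closed_atLeast continuous_closed_preimage cont closed_atLeastAtMost vimage_def Int_def inf_commute)
    ultimately show ?thesis by simp
  qed
  define s where "s = Inf S"
  have sS: "s \<in> S" unfolding s_def using closed_contains_Inf[OF Sne Sbdd Scl] .
  have sle: "\<And>u. u \<in> S \<Longrightarrow> s \<le> u" unfolding s_def using Sbdd by (simp add: cInf_lower)
  have st: "t < s" using sS t unfolding S_def by (cases "s = t") auto
  have fsc: "f s = c"
  proof (rule ccontr)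
    assume "f s \<noteq> c"
    hence "f s > c" using sS unfolding S_def by auto
    have "{t..s} \<subseteq> {t..y}" using sS unfolding S_def by auto
    hence "continuous_on {t..s} f" using cont continuous_on_subset by blast
    then obtain u where u: "t \<le> u" "u \<le> s" "f u = c"
      using IVT'[of f t c s] t st \<open>f s > c\<close> by auto
    have "u \<in> S" using u sS unfolding S_def by auto
    moreover have "u \<noteq> s" using u \<open>f s > c\<close> by auto
    ultimately show False using sle u by force
  qed
  have sin: "s \<in> {l<..y}" using sS t st unfolding S_def by auto
  have "f' s < 0" using lev sin fsc by auto
  then obtain d where d: "d > 0" "\<forall>h>0. h < d \<longrightarrow> f s < f (s - h)"
    using DERIV_neg_dec_left der sin by blast
  define h where "h = min d (s - t) / 2"
  have h: "h > 0" "h < d" "s - h \<ge> t" using d st unfolding h_def by (auto simp: min_def field_simps)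
  have "f (s - h) > c" using d h fsc by auto
  hence "s - h \<in> S" using h sS unfolding S_def by auto
  thus False using sle h by force
qed

lemma barrier_le:
  fixes f f' :: "real \<Rightarrow> real"
  assumes ly: "l < y"
    and der: "\<forall>t\<in>{l<..y}. (f has_real_derivative f' t) (at t)"
    and lev: "\<forall>t\<in>{l<..y}. f t = c \<longrightarrow> f' t > 0"
    and fy: "f y \<le> c"
  shows "\<forall>t\<in>{l<..y}. f t \<le> c"
proof -
  have "\<forall>t\<in>{l<..y}. (- f t) \<ge> - c"
    apply (rule barrier_ge[where f="\<lambda>t. - f t" and f'="\<lambda>t. - f' t", OF ly])
    using der lev fy by (auto intro: derivative_intros)
  thus ?thesis by auto
qed

lemma blowup_up:
  fixes f f' :: "real \<Rightarrow> real"
  assumes ly: "l < y"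
    and der: "\<forall>t\<in>{l<..y}. (f has_real_derivative f' t) (at t)"
    and sl: "\<forall>t\<in>{l<..y}. f' t \<le> - c / (t - l)^2"
    and c: "c > 0"
    and bd: "\<forall>t\<in>{l<..y}. f t \<le> M"
  shows False
proof -
  define h where "h t = f t - c / (t - l)" for t
  have mono: "h y \<le> h t" if t: "t \<in> {l<..y}" for t
  proof (rule DERIV_nonpos_imp_nonincreasing[of t y h])
    show "t \<le> y" using t by auto
    fix x assume x: "t \<le> x" "x \<le> y"
    hence xl: "x - l \<noteq> 0" "x \<in> {l<..y}" using t by auto
    have "(h has_real_derivative (f' x + c / (x - l)^2)) (at x)"
      unfolding h_def using der xl
      by (auto intro!: derivative_eq_intros simp: power2_eq_square field_simps)
    moreover have "f' x + c / (x - l)^2 \<le> 0" using sl xl by force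
    ultimately show "\<exists>y. (h has_real_derivative y) (at x) \<and> y \<le> 0" by blast
  qed
  define B where "B = M - f y + c / (y - l)"
  define t where "t = l + min (y - l) (c / (\<bar>B\<bar> + 1))"
  have pos: "c / (\<bar>B\<bar> + 1) > 0" using c by auto
  have tin: "t \<in> {l<..y}" using ly pos unfolding t_def by auto
  have tl: "t - l > 0" "t - l \<le> c / (\<bar>B\<bar> + 1)" using tin unfolding t_def by auto
  have "c / (t - l) \<ge> \<bar>B\<bar> + 1"
    using tl c by (simp add: field_simps)
  hence "c / (t - l) > B" by linarith
  moreover have "h y \<le> h t" using mono tin .
  ultimately have "f t > M" unfolding h_def B_def by linarith
  thus False using bd tin by force
qed

lemma blowup_down:
  fixes f f' :: "real \<Rightarrow> real"
  assumes ly: "l < y"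
    and der: "\<forall>t\<in>{l<..y}. (f has_real_derivative f' t) (at t)"
    and sl: "\<forall>t\<in>{l<..y}. f' t \<ge> c / (t - l)^2"
    and c: "c > 0"
    and bd: "\<forall>t\<in>{l<..y}. f t \<ge> m"
  shows False
  apply (rule blowup_up[where f="\<lambda>t. - f t" and f'="\<lambda>t. - f' t" and c=c and M="-m", OF ly])
  using der sl c bd by (auto intro: derivative_intros)

lemma div_bound_neg:
  fixes a A x c :: real
  assumes "a > 0" "a \<le> A" "x * a \<le> - c" "c > 0" shows "x \<le> - c / A"
proof -
  have "x < 0"
  proof (rule ccontr)
    assume "\<not> x < 0"
    hence "x * a \<ge> 0" using assms by simp
    thus False using assms by linarith
  qed
  hence "x * A \<le> x * a" using assms by (simp add: mult_left_mono_neg)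
  hence "x * A \<le> - c" using assms by linarith
  moreover have "A > 0" using assms by linarith
  ultimately show ?thesis by (simp add: field_simps)
qed

lemma div_bound_pos:
  fixes a A x c :: real
  assumes "a > 0" "a \<le> A" "x * a \<ge> c" "c > 0" shows "x \<ge> c / A"
proof -
  have "- x \<le> - c / A" by (rule div_bound_neg) (use assms in auto)
  thus ?thesis by simp
qed

locale core =
  fixes f f' a g h0 :: "real \<Rightarrow> real" and l r K C M \<eta> pm pp :: real
  assumes lr: "l < r"
    and der: "\<forall>t\<in>{l<..<r}. (f has_real_derivative f' t) (at t)"
    and apos: "\<forall>t\<in>{l<..<r}. a t > 0"
    and aK: "\<forall>t\<in>{l<..<r}. a t \<le> K^2 * (t - l)^2"
    and Kpos: "K > 0"
    and eq: "\<forall>t\<in>{l<..<r}. a t * f' t = g t"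
    and gb: "\<forall>t\<in>{l<..<r}. \<bar>g t + h0 (f t)\<bar> \<le> C * (t - l)"
    and Cnn: "C \<ge> 0"
    and fb: "\<forall>t\<in>{l<..<r}. \<bar>f t\<bar> \<le> M"
    and eta: "\<eta> > 0"
    and pmpp: "pm \<le> pp"
    and hup: "\<forall>p e. \<bar>p\<bar> \<le> M \<and> e > 0 \<and> p \<ge> pp + e \<longrightarrow> h0 p \<ge> \<eta> * e"
    and hlo: "\<forall>p e. \<bar>p\<bar> \<le> M \<and> e > 0 \<and> p \<le> pm - e \<longrightarrow> h0 p \<ge> \<eta> * e"
    and hmid: "\<forall>p e. \<bar>p\<bar> \<le> M \<and> e > 0 \<and> pm + e \<le> p \<and> p \<le> pp - e \<longrightarrow> - h0 p \<ge> \<eta> * e"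
begin

definition dl :: "real \<Rightarrow> real" where "dl e = min (r - l) (\<eta> * e / (2 * (C + 1)))"

lemma dl_pos: "e > 0 \<Longrightarrow> dl e > 0"
  unfolding dl_def using lr eta Cnn by auto

lemma small_err:
  assumes e: "e > 0" and t: "t \<in> {l<..<r}" "t < l + dl e"
  shows "C * (t - l) < \<eta> * e / 2"
proof -
  have "t - l < \<eta> * e / (2 * (C + 1))" using t unfolding dl_def by auto
  hence "(C + 1) * (t - l) < \<eta> * e / 2" using Cnn by (simp add: field_simps)
  moreover have "C * (t - l) \<le> (C + 1) * (t - l)" using t by (simp add: algebra_simps)
  ultimately show ?thesis by linarith
qed

lemma slope_neg:
  assumes e: "e > 0" and t: "t \<in> {l<..<r}" "t < l + dl e" and h: "h0 (f t) \<ge> \<eta> * e"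
  shows "f' t \<le> - (\<eta> * e / (2 * K^2)) / (t - l)^2"
proof -
  have "g t \<le> - h0 (f t) + C * (t - l)" using gb t by force
  hence "g t \<le> - (\<eta> * e / 2)" using small_err[OF e t] h by linarith
  hence "f' t * a t \<le> - (\<eta> * e / 2)" using eq t by (simp add: mult.commute)
  have "f' t \<le> - (\<eta> * e / 2) / (K^2 * (t - l)^2)"
    by (rule div_bound_neg[of "a t"]) (use apos aK t e eta \<open>f' t * a t \<le> - (\<eta> * e / 2)\<close> in auto)
  thus ?thesis by (simp add: field_simps)
qed

lemma slope_pos:
  assumes e: "e > 0" and t: "t \<in> {l<..<r}" "t < l + dl e" and h: "- h0 (f t) \<ge> \<eta> * e"
  shows "f' t \<ge> (\<eta> * e / (2 * K^2)) / (t - l)^2"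
proof -
  have "g t \<ge> - h0 (f t) - C * (t - l)" using gb t by force
  hence "g t \<ge> (\<eta> * e / 2)" using small_err[OF e t] h by linarith
  hence "f' t * a t \<ge> (\<eta> * e / 2)" using eq t by (simp add: mult.commute)
  have "f' t \<ge> (\<eta> * e / 2) / (K^2 * (t - l)^2)"
    by (rule div_bound_pos[of "a t"]) (use apos aK t e eta \<open>f' t * a t \<ge> (\<eta> * e / 2)\<close> in auto)
  thus ?thesis by (simp add: field_simps)
qed

lemma core_eps:
  assumes e: "e > 0"
  shows "\<exists>x. l < x \<and> x < r \<and> (\<forall>t\<in>{l<..x}. pm - e \<le> f t \<and> f t < pp + e) \<and>
     (2 * e \<le> pp - pm \<longrightarrow> (\<forall>t\<in>{l<..x}. f t \<le> pm + e) \<or> (\<forall>t\<in>{l<..x}. f t > pp - e))"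
proof -
  define x1 where "x1 = l + dl e / 2"
  define cc where "cc = \<eta> * e / (2 * K^2)"
  have cc: "cc > 0" unfolding cc_def using eta e Kpos by auto
  have dle: "dl e \<le> r - l" unfolding dl_def by auto
  have x1: "l < x1" "x1 < r" "x1 < l + dl e" using dl_pos[OF e] dle unfolding x1_def by auto
  have sub: "t \<in> {l<..<r}" "t < l + dl e" if "t \<in> {l<..y}" "y \<le> x1" for t y
    using that x1 by auto
  have fbt: "\<bar>f t\<bar> \<le> M" if "t \<in> {l<..<r}" for t using fb that by auto
  have S1: "f' t \<le> - cc / (t - l)^2" if "t \<in> {l<..x1}" "f t \<ge> pp + e" for t
    unfolding cc_def
    by (rule slope_neg[OF e]) (use that sub[of t x1] hup fbt[of t] e in auto)
  have S2: "f' t \<le> - cc / (t - l)^2" if "t \<in> {l<..x1}" "f t \<le> pm - e" for t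
    unfolding cc_def
    by (rule slope_neg[OF e]) (use that sub[of t x1] hlo fbt[of t] e in auto)
  have S3: "f' t \<ge> cc / (t - l)^2" if "t \<in> {l<..x1}" "pm + e \<le> f t" "f t \<le> pp - e" for t
    unfolding cc_def
    by (rule slope_pos[OF e]) (use that sub[of t x1] hmid fbt[of t] e in auto)
  have negs: "- cc / (t - l)^2 < 0" "cc / (t - l)^2 > 0" if "t > l" for t
    using cc that by auto
  have derx: "\<forall>t\<in>{l<..y}. (f has_real_derivative f' t) (at t)" if "y \<le> x1" for y
    using der sub that by blast
  have F1: "\<forall>y\<in>{l<..x1}. f y < pp + e"
  proof (intro ballI, rule ccontr)
    fix y assume y: "y \<in> {l<..x1}" and ny: "\<not> f y < pp + e"
    have yx: "y \<le> x1" "l < y" using y by auto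
    have all: "\<forall>t\<in>{l<..y}. f t \<ge> pp + e"
    proof (rule barrier_ge[where f' = f', OF yx(2) derx[OF yx(1)]])
      show "\<forall>t\<in>{l<..y}. f t = pp + e \<longrightarrow> f' t < 0"
      proof (intro ballI impI)
        fix t assume t: "t \<in> {l<..y}" "f t = pp + e"
        have "f' t \<le> - cc / (t - l)^2" using S1[of t] t yx by auto
        moreover have "- cc / (t - l)^2 < 0" using negs t by auto
        ultimately show "f' t < 0" by linarith
      qed
      show "pp + e \<le> f y" using ny by simp
    qed
    show False
      by (rule blowup_up[of l y f f' cc M, OF yx(2) derx[OF yx(1)] _ cc])
         (use S1 all yx fbt sub in force)+
  qed
  obtain x2 where x2: "x2 \<in> {l<..x1}" "\<forall>t\<in>{l<..x2}. f t \<ge> pm - e"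
  proof -
    have "\<exists>x2\<in>{l<..x1}. f x2 \<ge> pm - e"
    proof (rule ccontr)
      assume "\<not> ?thesis"
      hence lt: "\<forall>t\<in>{l<..x1}. f t < pm - e" by auto
      show False
        by (rule blowup_up[of l x1 f f' cc "pm - e", OF x1(1) derx[OF order_refl] _ cc])
           (use S2 lt in force)+
    qed
    then obtain x2 where x2: "x2 \<in> {l<..x1}" "f x2 \<ge> pm - e" by blast
    have x2x: "x2 \<le> x1" "l < x2" using x2 by auto
    have "\<forall>t\<in>{l<..x2}. f t \<ge> pm - e"
    proof (rule barrier_ge[where f' = f', OF x2x(2) derx[OF x2x(1)]])
      show "\<forall>t\<in>{l<..x2}. f t = pm - e \<longrightarrow> f' t < 0"
      proof (intro ballI impI)
        fix t assume t: "t \<in> {l<..x2}" "f t = pm - e"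
        have "f' t \<le> - cc / (t - l)^2" using S2[of t] t x2x by auto
        moreover have "- cc / (t - l)^2 < 0" using negs t by auto
        ultimately show "f' t < 0" by linarith
      qed
      show "pm - e \<le> f x2" using x2 by simp
    qed
    thus ?thesis using that x2 by blast
  qed
  have x2x: "x2 \<le> x1" "l < x2" using x2 by auto
  show ?thesis
  proof (cases "2 * e \<le> pp - pm \<and> \<not> (\<forall>t\<in>{l<..x2}. f t > pp - e)")
    case False
    thus ?thesis using x2 F1 x1 by (intro exI[of _ x2]) auto
  next
    case True
    then obtain x3 where x3: "x3 \<in> {l<..x2}" "f x3 \<le> pp - e" by force
    have x3x: "x3 \<le> x1" "l < x3" "x3 \<le> x2" using x3 x2x by auto
    have A3: "\<forall>t\<in>{l<..x3}. f t \<le> pp - e"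
    proof (rule barrier_le[where f' = f', OF x3x(2) derx[OF x3x(1)]])
      show "\<forall>t\<in>{l<..x3}. f t = pp - e \<longrightarrow> f' t > 0"
      proof (intro ballI impI)
        fix t assume t: "t \<in> {l<..x3}" "f t = pp - e"
        have "cc / (t - l)^2 \<le> f' t" using S3[of t] t x3x True by auto
        moreover have "cc / (t - l)^2 > 0" using negs t by auto
        ultimately show "f' t > 0" by linarith
      qed
      show "f x3 \<le> pp - e" using x3 by simp
    qed
    have "\<exists>x4\<in>{l<..x3}. f x4 \<le> pm + e"
    proof (rule ccontr)
      assume "\<not> ?thesis"
      hence gt: "\<forall>t\<in>{l<..x3}. f t > pm + e" by auto
      show False
        by (rule blowup_down[of l x3 f f' cc "pm + e", OF x3x(2) derx[OF x3x(1)] _ cc])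
           (use S3 gt A3 x3x in force)+
    qed
    then obtain x4 where x4: "x4 \<in> {l<..x3}" "f x4 \<le> pm + e" by blast
    have x4x: "x4 \<le> x1" "l < x4" "x4 \<le> x3" using x4 x3x by auto
    have A4: "\<forall>t\<in>{l<..x4}. f t \<le> pm + e"
    proof (rule barrier_le[where f' = f', OF x4x(2) derx[OF x4x(1)]])
      show "\<forall>t\<in>{l<..x4}. f t = pm + e \<longrightarrow> f' t > 0"
      proof (intro ballI impI)
        fix t assume t: "t \<in> {l<..x4}" "f t = pm + e"
        have "cc / (t - l)^2 \<le> f' t" using S3[of t] t x4x True by auto
        moreover have "cc / (t - l)^2 > 0" using negs t by auto
        ultimately show "f' t > 0" by linarith
      qed
      show "f x4 \<le> pm + e" using x4 by simp
    qed
    have "x4 \<le> x2" using x4x x3x by linarith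
    thus ?thesis using x4x x2 F1 x1 A4 by (intro exI[of _ x4]) auto
  qed
qed

lemma core_lim: "\<exists>L. (L = pm \<or> L = pp) \<and> (\<forall>e>0. \<exists>d>0. \<forall>t. l < t \<and> t < l + d \<longrightarrow> \<bar>f t - L\<bar> < e)"
proof (cases "pm = pp")
  case True
  have "\<forall>e>0. \<exists>d>0. \<forall>t. l < t \<and> t < l + d \<longrightarrow> \<bar>f t - pm\<bar> < e"
  proof (intro allI impI)
    fix e :: real assume e: "e > 0"
    obtain x where x: "l < x" "\<forall>t\<in>{l<..x}. pm - e/2 \<le> f t \<and> f t < pp + e/2"
      using core_eps[of "e/2"] e by auto
    show "\<exists>d>0. \<forall>t. l < t \<and> t < l + d \<longrightarrow> \<bar>f t - pm\<bar> < e"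
    proof (intro exI[of _ "x - l"] conjI allI impI)
      show "x - l > 0" using x by simp
      fix t assume t: "l < t \<and> t < l + (x - l)"
      hence "pm - e/2 \<le> f t \<and> f t < pp + e/2" using x by auto
      thus "\<bar>f t - pm\<bar> < e" using True e by auto
    qed
  qed
  thus ?thesis by blast
next
  case False
  hence lt: "pm < pp" using pmpp by simp
  define e0 where "e0 = (pp - pm) / 2"
  have e0: "e0 > 0" "2 * e0 \<le> pp - pm" using lt unfolding e0_def by auto
  obtain xa where xa: "l < xa"
    "(\<forall>t\<in>{l<..xa}. f t \<le> pm + e0) \<or> (\<forall>t\<in>{l<..xa}. f t > pp - e0)"
    using core_eps[OF e0(1)] e0 by blast
  have key: "\<exists>x. l < x \<and> ((\<forall>t\<in>{l<..x}. pm - \<epsilon> \<le> f t \<and> f t \<le> pm + \<epsilon>) \<or>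
       (\<forall>t\<in>{l<..x}. pp - \<epsilon> < f t \<and> f t < pp + \<epsilon>))"
    if eps: "\<epsilon> > 0" "\<epsilon> \<le> e0" for \<epsilon>
  proof -
    obtain x where x: "l < x" "\<forall>t\<in>{l<..x}. pm - \<epsilon> \<le> f t \<and> f t < pp + \<epsilon>"
      "(\<forall>t\<in>{l<..x}. f t \<le> pm + \<epsilon>) \<or> (\<forall>t\<in>{l<..x}. f t > pp - \<epsilon>)"
      using core_eps[OF eps(1)] eps e0 by auto
    thus ?thesis by (intro exI[of _ x]) auto
  qed
  show ?thesis
  proof (cases "\<forall>t\<in>{l<..xa}. f t \<le> pm + e0")
    case A0: True
    have "\<forall>e>0. \<exists>d>0. \<forall>t. l < t \<and> t < l + d \<longrightarrow> \<bar>f t - pm\<bar> < e"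
    proof (intro allI impI)
      fix e :: real assume e: "e > 0"
      define \<epsilon> where "\<epsilon> = min (e/2) e0"
      have eps: "\<epsilon> > 0" "\<epsilon> \<le> e0" "\<epsilon> < e" using e e0 unfolding \<epsilon>_def by auto
      obtain x where x: "l < x" and alt: "(\<forall>t\<in>{l<..x}. pm - \<epsilon> \<le> f t \<and> f t \<le> pm + \<epsilon>) \<or>
       (\<forall>t\<in>{l<..x}. pp - \<epsilon> < f t \<and> f t < pp + \<epsilon>)" using key[OF eps(1,2)] by blast
      have nB: "\<not> (\<forall>t\<in>{l<..x}. pp - \<epsilon> < f t \<and> f t < pp + \<epsilon>)"
      proof
        assume B: "\<forall>t\<in>{l<..x}. pp - \<epsilon> < f t \<and> f t < pp + \<epsilon>"
        define t where "t = (l + min x xa) / 2"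
        have "t \<in> {l<..x}" "t \<in> {l<..xa}" using x xa unfolding t_def by auto
        hence "pp - \<epsilon> < f t" "f t \<le> pm + e0" using B A0 by auto
        thus False using eps(2) unfolding e0_def by (simp add: field_simps)
      qed
      show "\<exists>d>0. \<forall>t. l < t \<and> t < l + d \<longrightarrow> \<bar>f t - pm\<bar> < e"
      proof (intro exI[of _ "x - l"] conjI allI impI)
        show "x - l > 0" using x by simp
        fix t assume t: "l < t \<and> t < l + (x - l)"
        hence "pm - \<epsilon> \<le> f t \<and> f t \<le> pm + \<epsilon>" using alt nB by auto
        thus "\<bar>f t - pm\<bar> < e" using eps by auto
      qed
    qed
    thus ?thesis by blast
  next
    case False
    hence B0: "\<forall>t\<in>{l<..xa}. f t > pp - e0" using xa by blast
    have "\<forall>e>0. \<exists>d>0. \<forall>t. l < t \<and> t < l + d \<longrightarrow> \<bar>f t - pp\<bar> < e"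
    proof (intro allI impI)
      fix e :: real assume e: "e > 0"
      define \<epsilon> where "\<epsilon> = min (e/2) e0"
      have eps: "\<epsilon> > 0" "\<epsilon> \<le> e0" "\<epsilon> < e" using e e0 unfolding \<epsilon>_def by auto
      obtain x where x: "l < x" and alt: "(\<forall>t\<in>{l<..x}. pm - \<epsilon> \<le> f t \<and> f t \<le> pm + \<epsilon>) \<or>
       (\<forall>t\<in>{l<..x}. pp - \<epsilon> < f t \<and> f t < pp + \<epsilon>)" using key[OF eps(1,2)] by blast
      have nA: "\<not> (\<forall>t\<in>{l<..x}. pm - \<epsilon> \<le> f t \<and> f t \<le> pm + \<epsilon>)"
      proof
        assume A: "\<forall>t\<in>{l<..x}. pm - \<epsilon> \<le> f t \<and> f t \<le> pm + \<epsilon>"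
        define t where "t = (l + min x xa) / 2"
        have "t \<in> {l<..x}" "t \<in> {l<..xa}" using x xa unfolding t_def by auto
        hence "f t \<le> pm + \<epsilon>" "f t > pp - e0" using A B0 by auto
        thus False using eps(2) unfolding e0_def by (simp add: field_simps)
      qed
      show "\<exists>d>0. \<forall>t. l < t \<and> t < l + d \<longrightarrow> \<bar>f t - pp\<bar> < e"
      proof (intro exI[of _ "x - l"] conjI allI impI)
        show "x - l > 0" using x by simp
        fix t assume t: "l < t \<and> t < l + (x - l)"
        hence "pp - \<epsilon> < f t \<and> f t < pp + \<epsilon>" using alt nA by auto
        thus "\<bar>f t - pp\<bar> < e" using eps by auto
      qed
    qed
    thus ?thesis by blast
  qed
qed

end

lemma core_right:
  fixes f f' a g h0 :: "real \<Rightarrow> real" and l r K C M \<eta> pm pp :: real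
  assumes lr: "l < r"
    and der: "\<forall>t\<in>{l<..<r}. (f has_real_derivative f' t) (at t)"
    and apos: "\<forall>t\<in>{l<..<r}. a t > 0"
    and aK: "\<forall>t\<in>{l<..<r}. a t \<le> K^2 * (r - t)^2"
    and Kpos: "K > 0"
    and eq: "\<forall>t\<in>{l<..<r}. a t * f' t = g t"
    and gb: "\<forall>t\<in>{l<..<r}. \<bar>g t + h0 (f t)\<bar> \<le> C * (r - t)"
    and Cnn: "C \<ge> 0"
    and fb: "\<forall>t\<in>{l<..<r}. \<bar>f t\<bar> \<le> M"
    and eta: "\<eta> > 0"
    and pmpp: "pm \<le> pp"
    and hup: "\<forall>p e. \<bar>p\<bar> \<le> M \<and> e > 0 \<and> p \<ge> pp + e \<longrightarrow> h0 p \<ge> \<eta> * e"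
    and hlo: "\<forall>p e. \<bar>p\<bar> \<le> M \<and> e > 0 \<and> p \<le> pm - e \<longrightarrow> h0 p \<ge> \<eta> * e"
    and hmid: "\<forall>p e. \<bar>p\<bar> \<le> M \<and> e > 0 \<and> pm + e \<le> p \<and> p \<le> pp - e \<longrightarrow> - h0 p \<ge> \<eta> * e"
  shows "\<exists>L. (L = pm \<or> L = pp) \<and> (\<forall>e>0. \<exists>d>0. \<forall>t. r - d < t \<and> t < r \<longrightarrow> \<bar>f t - L\<bar> < e)"
proof -
  have mem: "y \<in> {-r<..<-l} \<longleftrightarrow> - y \<in> {l<..<r}" for y by auto
  interpret R: core "\<lambda>y. - f (- y)" "\<lambda>y. f' (- y)" "\<lambda>y. a (- y)" "\<lambda>y. g (- y)" "\<lambda>q. h0 (- q)"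
    "- r" "- l" K C M \<eta> "- pp" "- pm"
  proof
    show "- r < - l" using lr by simp
    show "\<forall>t\<in>{- r<..<- l}. ((\<lambda>y. - f (- y)) has_real_derivative f' (- t)) (at t)"
    proof
      fix t assume "t \<in> {- r<..<- l}"
      hence "(f has_real_derivative f' (- t)) (at (- t))" using der mem by blast
      hence "((\<lambda>y. f (- y)) has_real_derivative - f' (- t)) (at t)" using DERIV_mirror by blast
      thus "((\<lambda>y. - f (- y)) has_real_derivative f' (- t)) (at t)"
        using DERIV_minus by fastforce
    qed
    show "\<forall>t\<in>{- r<..<- l}. 0 < a (- t)" using apos mem by blast
    show "\<forall>t\<in>{- r<..<- l}. a (- t) \<le> K\<^sup>2 * (t - - r)\<^sup>2"
    proof
      fix t assume "t \<in> {- r<..<- l}"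
      hence "a (- t) \<le> K^2 * (r - - t)^2" using aK mem by blast
      thus "a (- t) \<le> K\<^sup>2 * (t - - r)\<^sup>2" by (simp add: add.commute)
    qed
    show "0 < K" by fact
    show "\<forall>t\<in>{- r<..<- l}. a (- t) * f' (- t) = g (- t)" using eq mem by blast
    show "\<forall>t\<in>{- r<..<- l}. \<bar>g (- t) + h0 (- (- f (- t)))\<bar> \<le> C * (t - - r)"
    proof
      fix t assume "t \<in> {- r<..<- l}"
      hence "\<bar>g (- t) + h0 (f (- t))\<bar> \<le> C * (r - - t)" using gb mem by blast
      thus "\<bar>g (- t) + h0 (- (- f (- t)))\<bar> \<le> C * (t - - r)" by (simp add: add.commute)
    qed
    show "0 \<le> C" by fact
    show "\<forall>t\<in>{- r<..<- l}. \<bar>- f (- t)\<bar> \<le> M" using fb mem by auto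
    show "0 < \<eta>" by fact
    show "- pp \<le> - pm" using pmpp by simp
    show "\<forall>p e. \<bar>p\<bar> \<le> M \<and> 0 < e \<and> - pm + e \<le> p \<longrightarrow> \<eta> * e \<le> h0 (- p)"
    proof (intro allI impI)
      fix p e assume h: "\<bar>p\<bar> \<le> M \<and> 0 < e \<and> - pm + e \<le> p"
      hence "\<bar>- p\<bar> \<le> M \<and> 0 < e \<and> - p \<le> pm - e" by auto
      thus "\<eta> * e \<le> h0 (- p)" using hlo by blast
    qed
    show "\<forall>p e. \<bar>p\<bar> \<le> M \<and> 0 < e \<and> p \<le> - pp - e \<longrightarrow> \<eta> * e \<le> h0 (- p)"
    proof (intro allI impI)
      fix p e assume h: "\<bar>p\<bar> \<le> M \<and> 0 < e \<and> p \<le> - pp - e"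
      hence "\<bar>- p\<bar> \<le> M \<and> 0 < e \<and> - p \<ge> pp + e" by auto
      thus "\<eta> * e \<le> h0 (- p)" using hup by blast
    qed
    show "\<forall>p e. \<bar>p\<bar> \<le> M \<and> 0 < e \<and> - pp + e \<le> p \<and> p \<le> - pm - e \<longrightarrow> \<eta> * e \<le> - h0 (- p)"
    proof (intro allI impI)
      fix p e assume h: "\<bar>p\<bar> \<le> M \<and> 0 < e \<and> - pp + e \<le> p \<and> p \<le> - pm - e"
      hence "\<bar>- p\<bar> \<le> M \<and> 0 < e \<and> pm + e \<le> - p \<and> - p \<le> pp - e" by auto
      thus "\<eta> * e \<le> - h0 (- p)" using hmid by blast
    qed
  qed
  obtain L where L: "L = - pp \<or> L = - pm"
    "\<forall>e>0. \<exists>d>0. \<forall>t. - r < t \<and> t < - r + d \<longrightarrow> \<bar>- f (- t) - L\<bar> < e"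
    using R.core_lim by blast
  show ?thesis
  proof (rule exI[of _ "- L"], intro conjI allI impI)
    show "- L = pm \<or> - L = pp" using L by auto
    fix e :: real assume e: "e > 0"
    then obtain d where d: "d > 0" "\<forall>t. - r < t \<and> t < - r + d \<longrightarrow> \<bar>- f (- t) - L\<bar> < e"
      using L(2) by blast
    show "\<exists>d>0. \<forall>t. r - d < t \<and> t < r \<longrightarrow> \<bar>f t - - L\<bar> < e"
    proof (intro exI[of _ d] conjI allI impI)
      show "d > 0" by fact
      fix t assume t: "r - d < t \<and> t < r"
      hence "\<bar>- f (- (- t)) - L\<bar> < e" using d(2)[rule_format, of "- t"] by auto
      thus "\<bar>f t - - L\<bar> < e" by (simp add: abs_minus_commute)
    qed
  qed
qed

lemma sublevel:
  fixes \<phi> :: "real \<Rightarrow> real" and q lam \<eta> :: real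
  assumes mn: "\<forall>p. \<phi> q \<le> \<phi> p" and eta: "\<eta> > 0" and lam: "lam \<ge> \<phi> q"
    and e1: "\<forall>p1 p2. p1 < p2 \<and> p2 \<le> q \<longrightarrow> \<phi> p1 - \<phi> p2 \<ge> \<eta> * \<bar>p1 - p2\<bar>"
    and e2: "\<forall>p1 p2. p2 > p1 \<and> p1 \<ge> q \<longrightarrow> \<phi> p2 - \<phi> p1 \<ge> \<eta> * \<bar>p1 - p2\<bar>"
  defines "pm \<equiv> Inf {p. \<phi> p \<le> lam}" and "pp \<equiv> Sup {p. \<phi> p \<le> lam}"
  shows "pm \<le> pp"
    and "\<forall>p e. e > 0 \<and> p \<ge> pp + e \<longrightarrow> \<phi> p - lam \<ge> \<eta> * e"
    and "\<forall>p e. e > 0 \<and> p \<le> pm - e \<longrightarrow> \<phi> p - lam \<ge> \<eta> * e"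
    and "\<forall>p e. e > 0 \<and> pm + e \<le> p \<and> p \<le> pp - e \<longrightarrow> - (\<phi> p - lam) \<ge> \<eta> * e"
proof -
  define S where "S = {p. \<phi> p \<le> lam}"
  have qS: "q \<in> S" using lam unfolding S_def by simp
  have Sne: "S \<noteq> {}" using qS by blast
  have ub: "p \<le> q + (lam - \<phi> q) / \<eta>" if "p \<in> S" for p
  proof (cases "p > q")
    case True
    hence "\<phi> p - \<phi> q \<ge> \<eta> * (p - q)" using e2[rule_format, of q p] by simp
    hence "\<eta> * (p - q) \<le> lam - \<phi> q" using that unfolding S_def by simp
    hence "p - q \<le> (lam - \<phi> q) / \<eta>" using eta by (simp add: field_simps)
    thus ?thesis by simp
  next
    case False
    moreover have "(lam - \<phi> q) / \<eta> \<ge> 0" using lam eta by simp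
    ultimately show ?thesis by simp
  qed
  have lb: "p \<ge> q - (lam - \<phi> q) / \<eta>" if "p \<in> S" for p
  proof (cases "p < q")
    case True
    hence "\<phi> p - \<phi> q \<ge> \<eta> * (q - p)" using e1[rule_format, of p q] by simp
    hence "\<eta> * (q - p) \<le> lam - \<phi> q" using that unfolding S_def by simp
    hence "q - p \<le> (lam - \<phi> q) / \<eta>" using eta by (simp add: field_simps)
    thus ?thesis by simp
  next
    case False
    moreover have "(lam - \<phi> q) / \<eta> \<ge> 0" using lam eta by simp
    ultimately show ?thesis by simp
  qed
  have ba: "bdd_above S" using ub by (intro bdd_aboveI) blast
  have bb: "bdd_below S" using lb by (intro bdd_belowI) blast
  have pmS: "pm = Inf S" and ppS: "pp = Sup S" unfolding pm_def pp_def S_def by auto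
  have qpp: "q \<le> pp" using cSup_upper[OF qS ba] ppS by simp
  have pmq: "pm \<le> q" using cInf_lower[OF qS bb] pmS by simp
  show "pm \<le> pp" using qpp pmq by simp
  have step: "\<exists>s'. 0 < s' \<and> s' < e \<and> \<eta> * s' \<le> s" if "e > 0" "s > 0" for e s
    using that eta by (intro exI[of _ "min (s/\<eta>) e / 2"]) (auto simp: min_def field_simps)
  show "\<forall>p e. e > 0 \<and> p \<ge> pp + e \<longrightarrow> \<phi> p - lam \<ge> \<eta> * e"
  proof (intro allI impI)
    fix p e :: real assume h: "e > 0 \<and> p \<ge> pp + e"
    show "\<phi> p - lam \<ge> \<eta> * e"
    proof (rule field_le_epsilon)
      fix s :: real assume s: "s > 0"
      obtain s' where s': "0 < s'" "s' < e" "\<eta> * s' \<le> s" using step h s by blast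
      define p' where "p' = pp + s'"
      have "p' \<notin> S" using cSup_upper[OF _ ba, of p'] ppS s' unfolding p'_def by auto
      hence "\<phi> p' > lam" unfolding S_def by simp
      moreover have "\<phi> p - \<phi> p' \<ge> \<eta> * (p - pp - s')"
      proof -
        have "\<bar>p' - p\<bar> = p - pp - s'" using h s' unfolding p'_def by auto
        moreover have "\<phi> p - \<phi> p' \<ge> \<eta> * \<bar>p' - p\<bar>" using e2[rule_format, of p' p] h s' qpp unfolding p'_def by auto
        ultimately show ?thesis by simp
      qed
      ultimately have "\<phi> p - lam > \<eta> * (p - pp - s')" by linarith
      moreover have "\<eta> * (p - pp - s') \<ge> \<eta> * e - \<eta> * s'"
        using mult_left_mono[of "e - s'" "p - pp - s'" \<eta>] h eta by (simp add: algebra_simps)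
      ultimately show "\<eta> * e \<le> \<phi> p - lam + s" using s' by linarith
    qed
  qed
  show "\<forall>p e. e > 0 \<and> p \<le> pm - e \<longrightarrow> \<phi> p - lam \<ge> \<eta> * e"
  proof (intro allI impI)
    fix p e :: real assume h: "e > 0 \<and> p \<le> pm - e"
    show "\<phi> p - lam \<ge> \<eta> * e"
    proof (rule field_le_epsilon)
      fix s :: real assume s: "s > 0"
      obtain s' where s': "0 < s'" "s' < e" "\<eta> * s' \<le> s" using step h s by blast
      define p' where "p' = pm - s'"
      have "p' \<notin> S" using cInf_lower[OF _ bb, of p'] pmS s' unfolding p'_def by auto
      hence "\<phi> p' > lam" unfolding S_def by simp
      moreover have "\<phi> p - \<phi> p' \<ge> \<eta> * (pm - s' - p)"
      proof -
        have "\<bar>p - p'\<bar> = pm - s' - p" using h s' unfolding p'_def by auto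
        moreover have "\<phi> p - \<phi> p' \<ge> \<eta> * \<bar>p - p'\<bar>" using e1[rule_format, of p p'] h s' pmq unfolding p'_def by auto
        ultimately show ?thesis by simp
      qed
      ultimately have "\<phi> p - lam > \<eta> * (pm - s' - p)" by linarith
      moreover have "\<eta> * (pm - s' - p) \<ge> \<eta> * e - \<eta> * s'"
        using mult_left_mono[of "e - s'" "pm - s' - p" \<eta>] h eta by (simp add: algebra_simps)
      ultimately show "\<eta> * e \<le> \<phi> p - lam + s" using s' by linarith
    qed
  qed
  show "\<forall>p e. e > 0 \<and> pm + e \<le> p \<and> p \<le> pp - e \<longrightarrow> - (\<phi> p - lam) \<ge> \<eta> * e"
  proof (intro allI impI)
    fix p e :: real assume h: "e > 0 \<and> pm + e \<le> p \<and> p \<le> pp - e"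
    show "- (\<phi> p - lam) \<ge> \<eta> * e"
    proof (rule field_le_epsilon)
      fix s :: real assume s: "s > 0"
      obtain s' where s': "0 < s'" "s' < e" "\<eta> * s' \<le> s" using step h s by blast
      show "\<eta> * e \<le> - (\<phi> p - lam) + s"
      proof (cases "p \<ge> q")
        case True
        define p' where "p' = pp - s'"
        have "p' < Sup S" using s' ppS unfolding p'_def by simp
        then obtain z where z: "z \<in> S" "p' < z" using less_cSup_iff[OF Sne ba] by blast
        have pp': "p < p'" using h s' unfolding p'_def by simp
        have "\<phi> z - \<phi> p' \<ge> \<eta> * \<bar>p' - z\<bar>" using e2[rule_format, of p' z] z pp' True by auto
        moreover have "\<eta> * \<bar>p' - z\<bar> \<ge> 0" using eta by simp
        ultimately have "\<phi> p' \<le> \<phi> z" by linarith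
        hence "\<phi> p' \<le> lam" using z unfolding S_def by simp
        moreover have "\<phi> p' - \<phi> p \<ge> \<eta> * (pp - s' - p)"
        proof -
          have "\<bar>p - p'\<bar> = pp - s' - p" using pp' unfolding p'_def by auto
          moreover have "\<phi> p' - \<phi> p \<ge> \<eta> * \<bar>p - p'\<bar>" using e2[rule_format, of p p'] pp' True by auto
          ultimately show ?thesis by simp
        qed
        moreover have "\<eta> * (pp - s' - p) \<ge> \<eta> * e - \<eta> * s'"
          using mult_left_mono[of "e - s'" "pp - s' - p" \<eta>] h eta by (simp add: algebra_simps)
        ultimately show ?thesis using s' by linarith
      next
        case False
        define p' where "p' = pm + s'"
        have "Inf S < p'" using s' pmS unfolding p'_def by simp
        then obtain z where z: "z \<in> S" "z < p'" using cInf_less_iff[OF Sne bb] by blast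
        have pp': "p' < p" using h s' unfolding p'_def by simp
        have "\<phi> z - \<phi> p' \<ge> \<eta> * \<bar>z - p'\<bar>" using e1[rule_format, of z p'] z pp' False by auto
        moreover have "\<eta> * \<bar>z - p'\<bar> \<ge> 0" using eta by simp
        ultimately have "\<phi> p' \<le> \<phi> z" by linarith
        hence "\<phi> p' \<le> lam" using z unfolding S_def by simp
        moreover have "\<phi> p' - \<phi> p \<ge> \<eta> * (p - pm - s')"
        proof -
          have "\<bar>p' - p\<bar> = p - pm - s'" using pp' unfolding p'_def by auto
          moreover have "\<phi> p' - \<phi> p \<ge> \<eta> * \<bar>p' - p\<bar>" using e1[rule_format, of p' p] pp' False by auto
          ultimately show ?thesis by simp
        qed
        moreover have "\<eta> * (p - pm - s') \<ge> \<eta> * e - \<eta> * s'"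
          using mult_left_mono[of "e - s'" "p - pm - s'" \<eta>] h eta by (simp add: algebra_simps)
        ultimately show ?thesis using s' by linarith
      qed
    qed
  qed
qed


lemma core_both:
  fixes f f' a g h0 :: "real \<Rightarrow> real" and l r K C M \<eta> pm pp x0 :: real
  assumes lr: "l < r" and x0: "x0 = l \<or> x0 = r"
    and der: "\<forall>t\<in>{l<..<r}. (f has_real_derivative f' t) (at t)"
    and apos: "\<forall>t\<in>{l<..<r}. a t > 0"
    and aK: "\<forall>t\<in>{l<..<r}. a t \<le> K^2 * (t - x0)^2"
    and Kpos: "K > 0"
    and eq: "\<forall>t\<in>{l<..<r}. a t * f' t = g t"
    and gb: "\<forall>t\<in>{l<..<r}. \<bar>g t + h0 (f t)\<bar> \<le> C * \<bar>t - x0\<bar>"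
    and Cnn: "C \<ge> 0"
    and fb: "\<forall>t\<in>{l<..<r}. \<bar>f t\<bar> \<le> M"
    and eta: "\<eta> > 0"
    and pmpp: "pm \<le> pp"
    and hup: "\<forall>p e. \<bar>p\<bar> \<le> M \<and> e > 0 \<and> p \<ge> pp + e \<longrightarrow> h0 p \<ge> \<eta> * e"
    and hlo: "\<forall>p e. \<bar>p\<bar> \<le> M \<and> e > 0 \<and> p \<le> pm - e \<longrightarrow> h0 p \<ge> \<eta> * e"
    and hmid: "\<forall>p e. \<bar>p\<bar> \<le> M \<and> e > 0 \<and> pm + e \<le> p \<and> p \<le> pp - e \<longrightarrow> - h0 p \<ge> \<eta> * e"
  shows "\<exists>L. (L = pm \<or> L = pp) \<and> (\<forall>e>0. \<exists>d>0. \<forall>t\<in>{l<..<r}. \<bar>t - x0\<bar> < d \<longrightarrow> \<bar>f t - L\<bar> < e)"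
proof (cases "x0 = l")
  case True
  interpret core f f' a g h0 l r K C M \<eta> pm pp
    using assms True by - (unfold_locales; auto)
  obtain L where L: "L = pm \<or> L = pp" "\<forall>e>0. \<exists>d>0. \<forall>t. l < t \<and> t < l + d \<longrightarrow> \<bar>f t - L\<bar> < e"
    using core_lim by blast
  show ?thesis
  proof (rule exI[of _ L], intro conjI allI impI)
    show "L = pm \<or> L = pp" by fact
    fix e :: real assume "e > 0"
    then obtain d where d: "d > 0" "\<forall>t. l < t \<and> t < l + d \<longrightarrow> \<bar>f t - L\<bar> < e" using L by blast
    show "\<exists>d>0. \<forall>t\<in>{l<..<r}. \<bar>t - x0\<bar> < d \<longrightarrow> \<bar>f t - L\<bar> < e"
      using d True by (intro exI[of _ d]) auto
  qed
next
  case False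
  hence xr: "x0 = r" using x0 by simp
  have aK': "\<forall>t\<in>{l<..<r}. a t \<le> K^2 * (r - t)^2" using aK xr by (simp add: power2_commute)
  have gb': "\<forall>t\<in>{l<..<r}. \<bar>g t + h0 (f t)\<bar> \<le> C * (r - t)" using gb xr by auto
  obtain L where L: "L = pm \<or> L = pp" "\<forall>e>0. \<exists>d>0. \<forall>t. r - d < t \<and> t < r \<longrightarrow> \<bar>f t - L\<bar> < e"
    using core_right[OF lr der apos aK' Kpos eq gb' Cnn fb eta pmpp hup hlo hmid] by blast
  show ?thesis
  proof (rule exI[of _ L], intro conjI allI impI)
    show "L = pm \<or> L = pp" by fact
    fix e :: real assume "e > 0"
    then obtain d where d: "d > 0" "\<forall>t. r - d < t \<and> t < r \<longrightarrow> \<bar>f t - L\<bar> < e" using L by blast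
    show "\<exists>d>0. \<forall>t\<in>{l<..<r}. \<bar>t - x0\<bar> < d \<longrightarrow> \<bar>f t - L\<bar> < e"
      using d xr by (intro exI[of _ d]) auto
  qed
qed

theorem mainTheorem9:
  fixes a :: "real \<Rightarrow> real" and H :: "real \<Rightarrow> real \<Rightarrow> real"
    and \<kappa> \<alpha>0 \<alpha>1 \<gamma> \<eta> :: real
    and l r x0 lam :: real and f f' :: "real \<Rightarrow> real"
  assumes a_range: "\<forall>x. 0 \<le> a x \<and> a x \<le> 1"
    and a_lip: "\<kappa>-lipschitz_on UNIV (\<lambda>x. sqrt (a x))"
    and H: "H_sqc \<alpha>0 \<alpha>1 \<gamma> \<eta> H" and \<gamma>: "\<gamma> > 2" and \<eta>: "\<eta> > 0"
    and J: "l < r"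
    and a_pos: "\<forall>x\<in>{l<..<r}. a x > 0"
    and x0: "x0 \<in> frontier {l<..<r}" and ax0: "a x0 = 0"
    and f_deriv: "\<forall>x\<in>{l<..<r}. (f has_real_derivative f' x) (at x)"
    and f'_cont: "continuous_on {l<..<r} f'"
    and f_bdd: "bounded (f ` {l<..<r})"
    and eq: "\<forall>x\<in>{l<..<r}. a x * f' x + H x (f x) = lam"
  shows "lam \<ge> hat_lambda H x0 \<and>
         (\<exists>L. (f \<longlongrightarrow> L) (at x0 within {l<..<r}) \<and>
              (L = p_minus H lam x0 \<or> L = p_plus H lam x0))"
proof -
  have H3: "\<forall>x y p. \<bar>H x p - H y p\<bar> \<le> \<alpha>1 * (\<bar>p\<bar> powr \<gamma> + 1) * \<bar>x - y\<bar>"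
    and Hu: "\<forall>x. (\<exists>!p. \<forall>q. H x p \<le> H x q)"
    and He1: "\<forall>x p1 p2. p1 < p2 \<and> p2 \<le> hat_p H x \<longrightarrow> H x p1 - H x p2 \<ge> \<eta> * \<bar>p1 - p2\<bar>"
    and He2: "\<forall>x p1 p2. p2 > p1 \<and> p1 \<ge> hat_p H x \<longrightarrow> H x p2 - H x p1 \<ge> \<eta> * \<bar>p1 - p2\<bar>"
    using H unfolding H_sqc_def by auto
  define q where "q = hat_p H x0"
  have qmin: "\<forall>p. H x0 q \<le> H x0 p"
    using theI'[OF Hu[rule_format, of x0]] unfolding q_def hat_p_def by simp
  have hl: "hat_lambda H x0 = H x0 q" by (simp add: hat_lambda_def q_def)
  have x0': "x0 = l \<or> x0 = r" using frontier_ioo x0 J by blast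
  obtain M0 where M0: "\<forall>x\<in>{l<..<r}. \<bar>f x\<bar> \<le> M0"
    using f_bdd unfolding bounded_iff by auto
  define M where "M = max M0 0"
  have M: "M \<ge> 0" and fb: "\<forall>t\<in>{l<..<r}. \<bar>f t\<bar> \<le> M" using M0 unfolding M_def by force+
  have lip: "\<bar>sqrt (a t) - sqrt (a s)\<bar> \<le> \<kappa> * \<bar>t - s\<bar>" for t s
    using a_lip unfolding lipschitz_on_def dist_real_def by auto
  have knn: "\<kappa> \<ge> 0" using a_lip unfolding lipschitz_on_def by auto
  have sq: "sqrt (a t) \<le> \<kappa> * \<bar>t - x0\<bar>" for t
    using lip[of t x0] ax0 by simp
  have kpos: "\<kappa> > 0"
  proof (rule ccontr)
    assume "\<not> \<kappa> > 0"
    hence k0: "\<kappa> = 0" using knn by simp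
    define t where "t = (l + r) / 2"
    have tJ: "t \<in> {l<..<r}" using J unfolding t_def by auto
    have "sqrt (a t) \<le> 0" using sq[of t] k0 by simp
    hence "a t \<le> 0" by simp
    thus False using a_pos tJ by force
  qed
  have aK: "\<forall>t\<in>{l<..<r}. a t \<le> \<kappa>^2 * (t - x0)^2"
  proof
    fix t assume t: "t \<in> {l<..<r}"
    have "a t = (sqrt (a t))^2" using a_range by simp
    also have "\<dots> \<le> (\<kappa> * \<bar>t - x0\<bar>)^2" using sq[of t] a_range by (intro power_mono) auto
    also have "\<dots> = \<kappa>^2 * (t - x0)^2" by (simp add: power_mult_distrib)
    finally show "a t \<le> \<kappa>^2 * (t - x0)^2" .
  qed
  define C where "C = \<bar>\<alpha>1\<bar> * (M powr \<gamma> + 1)"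
  have Cnn: "C \<ge> 0" unfolding C_def by simp
  have gb: "\<forall>t\<in>{l<..<r}. \<bar>(lam - H t (f t)) + (H x0 (f t) - lam)\<bar> \<le> C * \<bar>t - x0\<bar>"
  proof
    fix t assume t: "t \<in> {l<..<r}"
    have "\<bar>(lam - H t (f t)) + (H x0 (f t) - lam)\<bar> = \<bar>H x0 (f t) - H t (f t)\<bar>" by simp
    also have "\<dots> \<le> \<alpha>1 * (\<bar>f t\<bar> powr \<gamma> + 1) * \<bar>x0 - t\<bar>" using H3 by blast
    also have "\<dots> \<le> \<bar>\<alpha>1\<bar> * (\<bar>f t\<bar> powr \<gamma> + 1) * \<bar>x0 - t\<bar>"
      by (intro mult_right_mono) auto
    also have "\<dots> \<le> \<bar>\<alpha>1\<bar> * (M powr \<gamma> + 1) * \<bar>x0 - t\<bar>"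
    proof -
      have "\<bar>f t\<bar> powr \<gamma> \<le> M powr \<gamma>" using fb t \<gamma> by (intro powr_mono2) auto
      thus ?thesis by (intro mult_right_mono mult_left_mono) auto
    qed
    also have "\<dots> = C * \<bar>t - x0\<bar>" unfolding C_def by (simp add: abs_minus_commute)
    finally show "\<bar>(lam - H t (f t)) + (H x0 (f t) - lam)\<bar> \<le> C * \<bar>t - x0\<bar>" .
  qed
  have eq': "\<forall>t\<in>{l<..<r}. a t * f' t = lam - H t (f t)" using eq by force
  have pick: "\<exists>t\<in>{l<..<r}. \<bar>t - x0\<bar> < d" if "d > 0" for d
  proof -
    define s where "s = min d (r - l) / 2"
    have s: "s > 0" "s < d" "s < r - l" using that J unfolding s_def by (auto simp: min_def)
    show ?thesis
    proof (cases "x0 = l")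
      case True thus ?thesis using s by (intro bexI[of _ "l + s"]) auto
    next
      case False hence "x0 = r" using x0' by simp
      thus ?thesis using s by (intro bexI[of _ "r - s"]) auto
    qed
  qed
  have lamge: "lam \<ge> H x0 q"
  proof (rule ccontr)
    assume "\<not> lam \<ge> H x0 q"
    define d where "d = H x0 q - lam"
    have d: "d > 0" using \<open>\<not> lam \<ge> H x0 q\<close> unfolding d_def by simp
    define \<eta>' where "\<eta>' = d / (2 * M + 1)"
    have \<eta>': "\<eta>' > 0" "\<eta>' * (2 * M + 1) = d" using d M unfolding \<eta>'_def by auto
    have hup: "\<forall>p e. \<bar>p\<bar> \<le> M \<and> e > 0 \<and> p \<ge> (- M - 1) + e \<longrightarrow> H x0 p - lam \<ge> \<eta>' * e"
    proof (intro allI impI)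
      fix p e assume h: "\<bar>p\<bar> \<le> M \<and> e > 0 \<and> p \<ge> (- M - 1) + e"
      have "e \<le> 2 * M + 1" using h by linarith
      hence "\<eta>' * e \<le> \<eta>' * (2 * M + 1)" using \<eta>' by (intro mult_left_mono) auto
      also have "\<dots> = d" by fact
      also have "\<dots> \<le> H x0 p - lam" using qmin unfolding d_def by (simp add: algebra_simps)
      finally show "H x0 p - lam \<ge> \<eta>' * e" .
    qed
    obtain L where L: "L = - M - 1"
      "\<forall>e>0. \<exists>d>0. \<forall>t\<in>{l<..<r}. \<bar>t - x0\<bar> < d \<longrightarrow> \<bar>f t - L\<bar> < e"
    proof -
      have hlo: "\<forall>p e. \<bar>p\<bar> \<le> M \<and> e > 0 \<and> p \<le> (- M - 1) - e \<longrightarrow> H x0 p - lam \<ge> \<eta>' * e"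
        by auto
      have hmid: "\<forall>p e. \<bar>p\<bar> \<le> M \<and> e > 0 \<and> (- M - 1) + e \<le> p \<and> p \<le> (- M - 1) - e \<longrightarrow> - (H x0 p - lam) \<ge> \<eta>' * e"
        by auto
      show ?thesis
        using core_both[OF J x0' f_deriv a_pos aK kpos eq' gb Cnn fb \<eta>'(1) order_refl hup hlo hmid] that
        by auto
    qed
    obtain d1 where d1: "d1 > 0" "\<forall>t\<in>{l<..<r}. \<bar>t - x0\<bar> < d1 \<longrightarrow> \<bar>f t - L\<bar> < 1"
      using L(2)[rule_format, of 1] by auto
    obtain t where t: "t \<in> {l<..<r}" "\<bar>t - x0\<bar> < d1" using pick[OF d1(1)] by blast
    have "\<bar>f t + M + 1\<bar> < 1" using d1(2) t L(1) by auto
    moreover have "\<bar>f t\<bar> \<le> M" using fb t by auto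
    ultimately show False by linarith
  qed
  have e1: "\<forall>p1 p2. p1 < p2 \<and> p2 \<le> q \<longrightarrow> H x0 p1 - H x0 p2 \<ge> \<eta> * \<bar>p1 - p2\<bar>"
    using He1 unfolding q_def by blast
  have e2: "\<forall>p1 p2. p2 > p1 \<and> p1 \<ge> q \<longrightarrow> H x0 p2 - H x0 p1 \<ge> \<eta> * \<bar>p1 - p2\<bar>"
    using He2 unfolding q_def by blast
  note SL = sublevel[of "H x0" q \<eta> lam, OF qmin \<eta> lamge e1 e2]
  have pm_def': "p_minus H lam x0 = Inf {p. H x0 p \<le> lam}" by (simp add: p_minus_def)
  have pp_def': "p_plus H lam x0 = Sup {p. H x0 p \<le> lam}" by (simp add: p_plus_def)
  obtain L where L: "L = p_minus H lam x0 \<or> L = p_plus H lam x0"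
    "\<forall>e>0. \<exists>d>0. \<forall>t\<in>{l<..<r}. \<bar>t - x0\<bar> < d \<longrightarrow> \<bar>f t - L\<bar> < e"
    using core_both[OF J x0' f_deriv a_pos aK kpos eq' gb Cnn fb \<eta>,
        of "p_minus H lam x0" "p_plus H lam x0"] SL unfolding pm_def' pp_def' by blast
  have "(f \<longlongrightarrow> L) (at x0 within {l<..<r})"
    unfolding Lim_within dist_real_def using L(2) by force
  thus ?thesis using L(1) lamge hl by auto
qed

end
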